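(* Let $I\subseteq\mathbb{K}[x_1,\dots,x_d]$ be a pure difference ideal. (1) Suppose $I=\langle p\rangle$ where $p$ is a canonical pure difference binomial, and let $L\subseteq\mathbb{Z}^d$ be the lattice spanned by the exponent vector of $p$. Then $I=I_L$; if moreover $p$ is irreducible, then $I=I_{\operatorname{Sat}(L)}$. (2) Suppose $I=\langle p_1,\dots,p_k\rangle$ with $p_1,\dots,p_k$ pure difference binomials with exponent vectors $\bm{v}_1,\dots,\bm{v}_k$, at least one of which lies in $\mathbb{Z}_{>0}^d$. Let $J$ be the ideal generated by the canonical binomials of $\bm{v}_1,\dots,\bm{v}_k$ and $L$ the lattice spanned by $\bm{v}_1,\dots,\bm{v}_k$. Then $J=I_L$.
   Context: $\mathbb{K}=\overline{\mathbb{Q}}$. A pure difference binomial is $\bm{x}^{\bm{\alpha}}-\bm{x}^{\bm{\beta}}$ with $\bm{\alpha},\bm{\beta}\in\mathbb{N}^d$; its exponent vector is $\bm{\alpha}-\bm{\beta}$; a pure difference ideal is an ideal generated by pure difference binomials. For $\bm{v}\in\mathbb{Z}^d$, with $\bm{v}_+=(\max\{v_1,0\},\dots,\max\{v_d,0\})$ and $\bm{v}_-=\bm{v}_+-\bm{v}$, the canonical binomial of $\bm{v}$ is $\bm{x}^{\bm{v}_+}-\bm{x}^{\bm{v}_-}$; a canonical pure difference binomial is the canonical binomial of some vector. For a lattice $L\subseteq\mathbb{Z}^d$, $I_L=\langle \bm{x}^{\bm{\alpha}}-\bm{x}^{\bm{\beta}} : \bm{\alpha},\bm{\beta}\in\mathbb{N}^d,\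 \bm{\alpha}-\bm{\beta}\in L\rangle$ and $\operatorname{Sat}(L)=\{\bm{u}\in\mathbb{Z}^d : c\bm{u}\in L\text{ for some } c\in\mathbb{Z}\setminus\{0\}\}$. *)

theory Defs
  imports "HOL-Algebra.Algebraic_Closure_Type" "HOL-Library.Poly_Mapping"
begin

type_synonym K = "rat alg_closure"

text \<open>Polynomial ring K[x_i : i in 'n], where 'n is a finite type with d = CARD('n) elements.
  A polynomial is a finitely supported map from monomials (exponent vectors 'n =>0 nat) to K.\<close>
type_synonym 'n mpoly = "('n \<Rightarrow>\<^sub>0 nat) \<Rightarrow>\<^sub>0 K"

definition monom :: "('n::finite \<Rightarrow> nat) \<Rightarrow> 'n mpoly" where
  "monom \<alpha> = Poly_Mapping.single (Abs_poly_mapping \<alpha>) 1"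

definition gen_ideal :: "'a::comm_ring_1 set \<Rightarrow> 'a set" where
  "gen_ideal S = {x. \<exists>F c. finite F \<and> F \<subseteq> S \<and> x = (\<Sum>f\<in>F. c f * f)}"

definition expvec :: "('n \<Rightarrow> nat) \<Rightarrow> ('n \<Rightarrow> nat) \<Rightarrow> ('n \<Rightarrow> int)" where
  "expvec \<alpha> \<beta> = (\<lambda>i. int (\<alpha> i) - int (\<beta> i))"

definition pos_part :: "('n \<Rightarrow> int) \<Rightarrow> ('n \<Rightarrow> nat)" where
  "pos_part v = (\<lambda>i. nat (max (v i) 0))"

definition neg_part :: "('n \<Rightarrow> int) \<Rightarrow> ('n \<Rightarrow> nat)" where
  "neg_part v = (\<lambda>i. nat (max (v i) 0 - v i))"

definition canon_binomial :: "('n::finite \<Rightarrow> int) \<Rightarrow> 'n mpoly" where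
  "canon_binomial v = monom (pos_part v) - monom (neg_part v)"

definition lattice_ideal :: "('n::finite \<Rightarrow> int) set \<Rightarrow> 'n mpoly set" where
  "lattice_ideal L = gen_ideal {monom \<alpha> - monom \<beta> | \<alpha> \<beta>. expvec \<alpha> \<beta> \<in> L}"

definition Sat :: "('n \<Rightarrow> int) set \<Rightarrow> ('n \<Rightarrow> int) set" where
  "Sat L = {u. \<exists>c::int. c \<noteq> 0 \<and> (\<lambda>i. c * u i) \<in> L}"

definition lattice_span :: "nat \<Rightarrow> (nat \<Rightarrow> ('n \<Rightarrow> int)) \<Rightarrow> ('n \<Rightarrow> int) set" where
  "lattice_span k v = {w. \<exists>c::nat \<Rightarrow> int. w = (\<lambda>j. \<Sum>i<k. c i * v i j)}"

end

theory Submission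
  imports Defs
begin


definition closedI :: "'a::comm_ring_1 set \<Rightarrow> bool" where
  "closedI I \<longleftrightarrow> 0 \<in> I \<and> (\<forall>x\<in>I. \<forall>y\<in>I. x + y \<in> I) \<and> (\<forall>r. \<forall>x\<in>I. r * x \<in> I)"

lemma closedI_sum: "finite F \<Longrightarrow> closedI I \<Longrightarrow> (\<And>f. f \<in> F \<Longrightarrow> g f \<in> I) \<Longrightarrow> sum g F \<in> I"
  by (induction F rule: finite_induct) (auto simp: closedI_def)

lemma gen_ideal_least: "closedI I \<Longrightarrow> S \<subseteq> I \<Longrightarrow> gen_ideal S \<subseteq> I"
  unfolding gen_ideal_def
proof safe
  fix F c assume "closedI I" "S \<subseteq> I" "finite F" "F \<subseteq> S"
  then show "(\<Sum>f\<in>F. c f * f) \<in> I"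
    by (intro closedI_sum) (auto simp: closedI_def)
qed

lemma gen_ideal_base: "x \<in> S \<Longrightarrow> x \<in> gen_ideal S"
  unfolding gen_ideal_def
  by (rule CollectI, rule exI[of _ "{x}"], rule exI[of _ "\<lambda>_. 1"]) auto

lemma gen_ideal_closed: "closedI (gen_ideal S)"
  unfolding closedI_def
proof (intro conjI ballI allI)
  show "0 \<in> gen_ideal S" unfolding gen_ideal_def
    by (rule CollectI, rule exI[of _ "{}"], rule exI[of _ "\<lambda>_. 0"]) simp
next
  fix x y assume "x \<in> gen_ideal S" "y \<in> gen_ideal S"
  then obtain F c G d where F: "finite F" "F \<subseteq> S" and xF: "x = (\<Sum>f\<in>F. c f * f)"
    and G: "finite G" "G \<subseteq> S" and yG: "y = (\<Sum>f\<in>G. d f * f)"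
    unfolding gen_ideal_def by blast
  define c' where "c' f = (if f \<in> F then c f else 0)" for f
  define d' where "d' f = (if f \<in> G then d f else 0)" for f
  have 1: "(\<Sum>f\<in>F \<union> G. c' f * f) = (\<Sum>f\<in>F. c' f * f)"
    by (rule sum.mono_neutral_right) (use F G in \<open>auto simp: c'_def\<close>)
  have 2: "(\<Sum>f\<in>F. c' f * f) = x"
    unfolding xF by (rule sum.cong) (auto simp: c'_def)
  have 3: "(\<Sum>f\<in>F \<union> G. d' f * f) = (\<Sum>f\<in>G. d' f * f)"
    by (rule sum.mono_neutral_right) (use F G in \<open>auto simp: d'_def\<close>)
  have 4: "(\<Sum>f\<in>G. d' f * f) = y"
    unfolding yG by (rule sum.cong) (auto simp: d'_def)
  have "x + y = (\<Sum>f\<in>F \<union> G. (c' f + d' f) * f)"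
    unfolding distrib_right sum.distrib 1 2 3 4 ..
  then show "x + y \<in> gen_ideal S" unfolding gen_ideal_def
    by (intro CollectI exI[of _ "F \<union> G"] exI[of _ "\<lambda>f. c' f + d' f"]) (use F G in auto)
next
  fix r x assume "x \<in> gen_ideal S"
  then obtain F c where F: "finite F" "F \<subseteq> S" and xF: "x = (\<Sum>f\<in>F. c f * f)"
    unfolding gen_ideal_def by blast
  have "r * x = (\<Sum>f\<in>F. (r * c f) * f)" unfolding xF by (simp add: sum_distrib_left mult.assoc)
  then show "r * x \<in> gen_ideal S" unfolding gen_ideal_def
    by (intro CollectI exI[of _ "F"] exI[of _ "\<lambda>f. r * c f"]) (use F in auto)
qed

lemma gen_ideal_mult: "x \<in> gen_ideal S \<Longrightarrow> r * x \<in> gen_ideal S"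
  using gen_ideal_closed unfolding closedI_def by blast
lemma gen_ideal_add: "x \<in> gen_ideal S \<Longrightarrow> y \<in> gen_ideal S \<Longrightarrow> x + y \<in> gen_ideal S"
  using gen_ideal_closed unfolding closedI_def by blast
lemma gen_ideal_zero: "0 \<in> gen_ideal S"
  using gen_ideal_closed unfolding closedI_def by blast
lemma gen_ideal_uminus: "x \<in> gen_ideal S \<Longrightarrow> - x \<in> gen_ideal S"
  using gen_ideal_mult[of x S "-1"] by simp
lemma gen_ideal_diff: "x \<in> gen_ideal S \<Longrightarrow> y \<in> gen_ideal S \<Longrightarrow> x - y \<in> gen_ideal S"
  using gen_ideal_add[OF _ gen_ideal_uminus] by (metis diff_conv_add_uminus)
lemma gen_ideal_subset: "S \<subseteq> gen_ideal T \<Longrightarrow> gen_ideal S \<subseteq> gen_ideal T"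
  by (rule gen_ideal_least[OF gen_ideal_closed])

lemma lookup_Abs_fin[simp]: "Poly_Mapping.lookup (Abs_poly_mapping (a::'n::finite \<Rightarrow> nat)) = a"
  by (rule lookup_Abs_poly_mapping) simp

lemma monom_add: "monom (\<lambda>i. a i + b i) = monom a * monom (b::'n::finite \<Rightarrow> nat)"
proof -
  have "Abs_poly_mapping (\<lambda>i. a i + b i) = Abs_poly_mapping a + Abs_poly_mapping b"
    by (rule poly_mapping_eqI) (simp add: lookup_add)
  then show ?thesis by (simp add: monom_def mult_single)
qed

lemma monom_zero: "monom (\<lambda>_. 0) = (1 :: 'n::finite mpoly)"
  by (simp add: monom_def)

lemma monom_pow: "monom (\<lambda>i. n * a i) = monom (a::'n::finite \<Rightarrow> nat) ^ n"
proof (induction n)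
  case 0 then show ?case by (simp add: monom_zero)
next
  case (Suc n)
  have "monom (\<lambda>i. Suc n * a i) = monom (\<lambda>i. a i + n * a i)" by simp
  also have "\<dots> = monom a * monom (\<lambda>i. n * a i)" by (rule monom_add)
  finally show ?case using Suc by simp
qed

lemma decomp:
  assumes "expvec \<gamma> \<delta> = w"
  shows "\<exists>\<epsilon>. \<gamma> = (\<lambda>i. pos_part w i + \<epsilon> i) \<and> \<delta> = (\<lambda>i. neg_part w i + \<epsilon> i)"
proof (rule exI[of _ "\<lambda>i. \<gamma> i - pos_part w i"], intro conjI ext)
  fix i
  have "w i = int (\<gamma> i) - int (\<delta> i)" using assms by (auto simp: expvec_def)
  then show "\<gamma> i = pos_part w i + (\<gamma> i - pos_part w i)" "\<delta> i = neg_part w i + (\<gamma> i - pos_part w i)"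
    by (auto simp: pos_part_def neg_part_def)
qed

lemma pow_gen:
  assumes "expvec \<alpha> \<beta> = (\<lambda>j. int n * w j)"
  shows "\<exists>r. monom \<alpha> - monom \<beta> = r * canon_binomial (w :: 'n::finite \<Rightarrow> int)"
proof -
  obtain \<epsilon> where e: "\<alpha> = (\<lambda>i. pos_part (\<lambda>j. int n * w j) i + \<epsilon> i)"
      "\<beta> = (\<lambda>i. neg_part (\<lambda>j. int n * w j) i + \<epsilon> i)"
    using decomp[OF assms] by blast
  have p: "pos_part (\<lambda>j. int n * w j) = (\<lambda>i. n * pos_part w i)"
  proof
    fix i show "pos_part (\<lambda>j. int n * w j) i = n * pos_part w i"
      by (cases "w i \<ge> 0") (simp_all add: pos_part_def nat_mult_distrib mult_nonneg_nonpos max_def mult_le_0_iff)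
  qed
  have q: "neg_part (\<lambda>j. int n * w j) = (\<lambda>i. n * neg_part w i)"
  proof
    fix i show "neg_part (\<lambda>j. int n * w j) i = n * neg_part w i"
      by (cases "w i \<ge> 0") (simp_all add: neg_part_def max_def mult_le_0_iff nat_mult_distrib flip: mult_minus_right)
  qed
  define Xm where "Xm = monom (pos_part w)"
  define Ym where "Ym = monom (neg_part w)"
  have "monom \<alpha> - monom \<beta> = (Xm ^ n - Ym ^ n) * monom \<epsilon>"
    unfolding e p q Xm_def Ym_def monom_add monom_pow by (simp add: left_diff_distrib right_diff_distrib mult.commute)
  also have "\<dots> = ((\<Sum>i<n. Ym^(n - Suc i) * Xm^i) * monom \<epsilon>) * canon_binomial w"
    unfolding power_diff_sumr2 canon_binomial_def Xm_def Ym_def by (simp add: mult_ac)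
  finally show ?thesis by blast
qed



definition mu :: "('n::finite \<Rightarrow> K) \<Rightarrow> ('n \<Rightarrow>\<^sub>0 nat) \<Rightarrow> K" where
  "mu a m = (\<Prod>i\<in>UNIV. a i ^ Poly_Mapping.lookup m i)"

definition ev :: "('n::finite \<Rightarrow> K) \<Rightarrow> 'n mpoly \<Rightarrow> K" where
  "ev a f = (\<Sum>m\<in>Poly_Mapping.keys f. Poly_Mapping.lookup f m * mu a m)"

lemma mu_add: "mu a (m + n) = mu a m * mu a n"
  by (simp add: mu_def lookup_add power_add prod.distrib)

lemma mu_zero: "mu a 0 = 1"
  by (simp add: mu_def)

lemma ev_superset: "finite A \<Longrightarrow> Poly_Mapping.keys f \<subseteq> A \<Longrightarrow>
   ev a f = (\<Sum>m\<in>A. Poly_Mapping.lookup f m * mu a m)"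
  unfolding ev_def by (rule sum.mono_neutral_left) (auto simp: in_keys_iff)

lemma ev_add: "ev a (f + g) = ev a f + ev a g"
proof -
  let ?A = "Poly_Mapping.keys f \<union> Poly_Mapping.keys g"
  have "ev a (f + g) = (\<Sum>m\<in>?A. Poly_Mapping.lookup (f + g) m * mu a m)"
    by (rule ev_superset) (auto dest: subsetD[OF keys_add])
  also have "\<dots> = (\<Sum>m\<in>?A. Poly_Mapping.lookup f m * mu a m) + (\<Sum>m\<in>?A. Poly_Mapping.lookup g m * mu a m)"
    by (simp add: lookup_add distrib_right sum.distrib)
  also have "\<dots> = ev a f + ev a g"
    by (simp add: ev_superset[symmetric])
  finally show ?thesis .
qed

lemma ev_zero: "ev a 0 = 0"
  by (simp add: ev_def)

lemma ev_diff: "ev a (f - g) = ev a f - ev a g"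
  using ev_add[of a "f - g" g] by simp

lemma ev_single: "ev a (Poly_Mapping.single m c) = c * mu a m"
  by (simp add: ev_def)

lemma ev_sum: "ev a (sum g F) = (\<Sum>x\<in>F. ev a (g x))"
  by (induction F rule: infinite_finite_induct) (simp_all add: ev_zero ev_add)

lemma expansion: "f = (\<Sum>m\<in>Poly_Mapping.keys f. Poly_Mapping.single m (Poly_Mapping.lookup f m))"
proof (rule poly_mapping_eqI)
  fix k
  show "Poly_Mapping.lookup f k = Poly_Mapping.lookup (\<Sum>m\<in>Poly_Mapping.keys f. Poly_Mapping.single m (Poly_Mapping.lookup f m)) k"
    by (simp add: lookup_sum lookup_single when_def in_keys_iff)
qed

lemma ev_mult: "ev a (f * g) = ev a f * ev a g"
proof -
  have "f * g = (\<Sum>m\<in>Poly_Mapping.keys f. Poly_Mapping.single m (Poly_Mapping.lookup f m)) *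
     (\<Sum>n\<in>Poly_Mapping.keys g. Poly_Mapping.single n (Poly_Mapping.lookup g n))"
    by (simp flip: expansion)
  also have "\<dots> = (\<Sum>m\<in>Poly_Mapping.keys f. \<Sum>n\<in>Poly_Mapping.keys g.
      Poly_Mapping.single (m + n) (Poly_Mapping.lookup f m * Poly_Mapping.lookup g n))"
    by (simp add: sum_product mult_single)
  finally have "ev a (f * g) = (\<Sum>m\<in>Poly_Mapping.keys f. \<Sum>n\<in>Poly_Mapping.keys g.
      (Poly_Mapping.lookup f m * mu a m) * (Poly_Mapping.lookup g n * mu a n))"
    by (simp add: ev_sum ev_single mu_add mult_ac)
  also have "\<dots> = ev a f * ev a g"
    by (simp add: ev_def sum_product)
  finally show ?thesis .
qed

lemma ev_one: "ev a 1 = 1"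
  using ev_single[of a 0 1] by (simp add: mu_zero)

lemma ev_pow: "ev a (f ^ n) = ev a f ^ n"
  by (induction n) (simp_all add: ev_one ev_mult)

lemma ev_monom: "ev a (monom \<alpha>) = (\<Prod>i\<in>UNIV. a i ^ \<alpha> i)"
  by (simp add: monom_def ev_single mu_def)

lemma ev_unit: "f dvd 1 \<Longrightarrow> ev a f \<noteq> 0"
proof
  assume "f dvd 1" "ev a f = 0"
  then obtain g where "1 = f * g" by (auto elim: dvdE)
  then have "ev a 1 = ev a f * ev a g" by (metis ev_mult)
  then show False using \<open>ev a f = 0\<close> by (simp add: ev_one)
qed

lemma prod_point: "(\<Prod>i\<in>UNIV. (if i = (i0::'n::finite) then t else 1) ^ \<alpha> i) = (t::K) ^ \<alpha> i0"
proof -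
  have "(\<Prod>i\<in>UNIV. (if i = i0 then t else 1) ^ \<alpha> i) = (\<Prod>i\<in>UNIV. if i = i0 then t ^ \<alpha> i else 1)"
    by (rule prod.cong) auto
  also have "\<dots> = t ^ \<alpha> i0" by (subst prod.delta) simp_all
  finally show ?thesis .
qed

lemma root_unity:
  assumes "n \<ge> 2"
  shows "\<exists>z::K. z \<noteq> 1 \<and> z ^ n = 1"
proof -
  obtain z :: K where z: "(\<Sum>k\<le>n - 1. (\<lambda>_. 1::K) k * z ^ k) = 0"
    using alg_closed[of "n - 1" "\<lambda>_. 1::K"] assms by auto
  have nk: "{..n - 1} = {..<n}" using assms by auto
  have zs: "(\<Sum>i<n. z ^ i) = 0" using z unfolding nk by simp
  have "z ^ n - 1 = (z - 1) * (\<Sum>i<n. z ^ i)" by (rule power_diff_1_eq)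
  also have "\<dots> = 0" using zs by simp
  finally have "z ^ n = 1" by simp
  moreover have "z \<noteq> 1"
  proof
    assume "z = 1"
    then have "(\<Sum>k<n. (1::K)) = 0" using zs by simp
    then have "(of_nat n :: K) = 0" by simp
    then show False using assms by simp
  qed
  ultimately show ?thesis by blast
qed



lemma pos_part_mult: "pos_part (\<lambda>j. int n * w j) = (\<lambda>i. n * pos_part w i)"
proof
  fix i show "pos_part (\<lambda>j. int n * w j) i = n * pos_part w i"
    by (cases "w i \<ge> 0") (simp_all add: pos_part_def nat_mult_distrib mult_nonneg_nonpos max_def mult_le_0_iff)
qed

lemma neg_part_mult: "neg_part (\<lambda>j. int n * w j) = (\<lambda>i. n * neg_part w i)"
proof
  fix i show "neg_part (\<lambda>j. int n * w j) i = n * neg_part w i"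
    by (cases "w i \<ge> 0") (simp_all add: neg_part_def max_def mult_le_0_iff nat_mult_distrib flip: mult_minus_right)
qed

lemma not_irred:
  assumes n: "n \<ge> 2" and w0: "w i0 \<noteq> 0" and v: "v = (\<lambda>i. int n * w i)"
  shows "\<not> Factorial_Ring.irreducible (canon_binomial (v :: 'n::finite \<Rightarrow> int))"
proof
  assume irr: "Factorial_Ring.irreducible (canon_binomial v)"
  define Xm where "Xm = monom (pos_part w)"
  define Ym where "Ym = monom (neg_part w)"
  define S where "S = (\<Sum>i<n. Ym^(n - Suc i) * Xm^i)"
  have "canon_binomial v = Xm ^ n - Ym ^ n"
    unfolding canon_binomial_def v pos_part_mult neg_part_mult monom_pow Xm_def Ym_def ..
  also have "\<dots> = (Xm - Ym) * S" unfolding S_def by (rule power_diff_sumr2)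
  finally have "(Xm - Ym) dvd 1 \<or> S dvd 1" by (rule irreducibleD[OF irr])
  moreover have "ev (\<lambda>_. 1) (Xm - Ym) = 0"
    by (simp add: ev_diff Xm_def Ym_def ev_monom)
  moreover have "ev (\<lambda>i. if i = i0 then t else 1) S = 0" if t: "t ^ nat \<bar>w i0\<bar> = z" "z \<noteq> 1" "z ^ n = 1" for t z
  proof -
    let ?a = "\<lambda>i. if i = i0 then t else 1"
    have ex: "ev ?a Xm = t ^ pos_part w i0" "ev ?a Ym = t ^ neg_part w i0"
      by (simp_all add: Xm_def Ym_def ev_monom prod_point)
    have pn: "(ev ?a Xm = z \<and> ev ?a Ym = 1) \<or> (ev ?a Xm = 1 \<and> ev ?a Ym = z)"
      using w0 t(1) unfolding ex by (cases "w i0 > 0") (auto simp: pos_part_def neg_part_def)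
    have "ev ?a (Xm - Ym) * ev ?a S = ev ?a (Xm ^ n - Ym ^ n)"
      by (simp add: ev_mult \<open>Xm ^ n - Ym ^ n = (Xm - Ym) * S\<close>)
    also have "\<dots> = 0" using pn t(3) by (auto simp: ev_diff ev_pow)
    finally have "ev ?a (Xm - Ym) * ev ?a S = 0" .
    moreover have "ev ?a (Xm - Ym) \<noteq> 0" using pn t(2) by (auto simp: ev_diff)
    ultimately show ?thesis by simp
  qed
  moreover obtain z :: K where z: "z \<noteq> 1" "z ^ n = 1" using root_unity[OF n] by blast
  moreover obtain t :: K where "t ^ nat \<bar>w i0\<bar> = z"
    using nth_root_exists[of "nat \<bar>w i0\<bar>" z] w0 by auto
  ultimately show False using ev_unit by metis
qed



lemma span1: "lattice_span 1 (\<lambda>_. v) = {w. \<exists>c::int. w = (\<lambda>j. c * v j)}"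
  unfolding lattice_span_def
proof safe
  fix c :: "nat \<Rightarrow> int" show "\<exists>d. (\<lambda>j. \<Sum>i<1. c i * v j) = (\<lambda>j. d * v j)" by auto
next
  fix c :: int show "\<exists>d::nat\<Rightarrow>int. (\<lambda>j. c * v j) = (\<lambda>j. \<Sum>i<1. d i * v j)"
    by (rule exI[of _ "\<lambda>_. c"]) simp
qed

lemma expvec_canon: "expvec (pos_part w) (neg_part w) = w"
  by (auto simp: expvec_def pos_part_def neg_part_def intro!: ext)

lemma canon_zero: "canon_binomial (\<lambda>_. 0) = 0"
  by (simp add: canon_binomial_def pos_part_def neg_part_def)

lemma sat_sub:
  assumes irr: "Factorial_Ring.irreducible (canon_binomial (v :: 'n::finite \<Rightarrow> int))"
    and u: "u \<in> Sat (lattice_span 1 (\<lambda>_. v))"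
  shows "u \<in> lattice_span 1 (\<lambda>_. v)"
proof -
  have "v \<noteq> (\<lambda>_. 0)" using irr canon_zero by (metis not_irreducible_zero)
  then obtain i0 where i0: "v i0 \<noteq> 0" by auto
  obtain c m where c: "c \<noteq> 0" and cm: "(\<lambda>i. c * u i) = (\<lambda>j. m * v j)"
    using u unfolding Sat_def span1 by blast
  define g where "g = gcd c m"
  have g0: "g \<noteq> 0" using c by (simp add: g_def)
  define c' where "c' = c div g"
  define m' where "m' = m div g"
  have cg: "c = c' * g" and mg: "m = m' * g" by (simp_all add: c'_def m'_def g_def)
  have cop: "coprime c' m'" unfolding c'_def m'_def g_def using c by (intro div_gcd_coprime) simp
  have c'0: "c' \<noteq> 0" using c cg by auto
  have eq: "c' * u i = m' * v i" for i
  proof -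
    have "c * u i = m * v i" using cm by metis
    then have "g * (c' * u i) = g * (m' * v i)" unfolding cg mg by (simp add: mult_ac)
    then show ?thesis using g0 by simp
  qed
  have dv: "c' dvd v i" for i
  proof -
    have "c' dvd m' * v i" using eq[of i] by (metis dvd_triv_left)
    then show ?thesis using cop by (simp add: coprime_dvd_mult_right_iff)
  qed
  define w where "w i = v i div c'" for i
  have vw: "v i = c' * w i" for i using dv[of i] by (simp add: w_def)
  have uw: "u i = m' * w i" for i
    using eq[of i] vw[of i] c'0 by (metis mult.left_commute mult_cancel_left)
  show ?thesis
  proof (cases "\<bar>c'\<bar> = 1")
    case True
    then have "c' * c' = 1" using abs_mult_self_eq[of c'] by simp
    then have "w i = c' * v i" for i unfolding vw by (simp add: mult.assoc[symmetric])
    then have "u = (\<lambda>j. (m' * c') * v j)" using uw by (auto simp: mult.assoc intro!: ext)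
    then show ?thesis unfolding span1 by blast
  next
    case False
    then have n2: "nat \<bar>c'\<bar> \<ge> 2" using c'0 by linarith
    have vv: "v = (\<lambda>i. int (nat \<bar>c'\<bar>) * (sgn c' * w i))"
      by (auto simp: vw abs_mult_sgn mult.assoc[symmetric] intro!: ext)
    have w0: "sgn c' * w i0 \<noteq> 0" using i0 c'0 vw[of i0] by (auto simp: sgn_0_0)
    show ?thesis using not_irred[OF n2 w0 vv] irr by simp
  qed
qed

lemma part1a: "gen_ideal {canon_binomial v} = lattice_ideal (lattice_span 1 (\<lambda>_. (v :: 'n::finite \<Rightarrow> int)))"
proof
  show "gen_ideal {canon_binomial v} \<subseteq> lattice_ideal (lattice_span 1 (\<lambda>_. v))"
    unfolding lattice_ideal_def
  proof (rule gen_ideal_subset, rule, rule gen_ideal_base)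
    fix x assume "x \<in> {canon_binomial v}"
    then show "x \<in> {monom \<alpha> - monom \<beta> |\<alpha> \<beta>. expvec \<alpha> \<beta> \<in> lattice_span 1 (\<lambda>_. v)}"
      unfolding span1 canon_binomial_def using expvec_canon[of v]
      by (intro CollectI exI[of _ "pos_part v"] exI[of _ "neg_part v"]) (auto intro: exI[of _ 1])
  qed
next
  show "lattice_ideal (lattice_span 1 (\<lambda>_. v)) \<subseteq> gen_ideal {canon_binomial v}"
    unfolding lattice_ideal_def
  proof (rule gen_ideal_subset, rule)
    fix x assume "x \<in> {monom \<alpha> - monom \<beta> |\<alpha> \<beta>. expvec \<alpha> \<beta> \<in> lattice_span 1 (\<lambda>_. v)}"
    then obtain \<alpha> \<beta> c where x: "x = monom \<alpha> - monom \<beta>" and e: "expvec \<alpha> \<beta> = (\<lambda>j. c * v j)"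
      unfolding span1 by blast
    have base: "canon_binomial v \<in> gen_ideal {canon_binomial v}" by (rule gen_ideal_base) simp
    show "x \<in> gen_ideal {canon_binomial v}"
    proof (cases "c \<ge> 0")
      case True
      then have "expvec \<alpha> \<beta> = (\<lambda>j. int (nat c) * v j)" using e by simp
      then obtain r where "monom \<alpha> - monom \<beta> = r * canon_binomial v" using pow_gen by blast
      then show ?thesis unfolding x using gen_ideal_mult[OF base] by metis
    next
      case False
      then have "expvec \<beta> \<alpha> = (\<lambda>j. int (nat (- c)) * v j)" using e
        by (auto simp: expvec_def fun_eq_iff) (metis minus_diff_eq)
      then obtain r where "monom \<beta> - monom \<alpha> = r * canon_binomial v" using pow_gen by blast
      then have "x = (- r) * canon_binomial v" unfolding x by (metis minus_diff_eq mult_minus_left)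
      then show ?thesis using gen_ideal_mult[OF base] by metis
    qed
  qed
qed

lemma part1b:
  assumes "Factorial_Ring.irreducible (canon_binomial (v :: 'n::finite \<Rightarrow> int))"
  shows "gen_ideal {canon_binomial v} = lattice_ideal (Sat (lattice_span 1 (\<lambda>_. v)))"
proof -
  have "Sat (lattice_span 1 (\<lambda>_. v)) = lattice_span 1 (\<lambda>_. v)"
  proof
    show "Sat (lattice_span 1 (\<lambda>_. v)) \<subseteq> lattice_span 1 (\<lambda>_. v)" using sat_sub[OF assms] by blast
    show "lattice_span 1 (\<lambda>_. v) \<subseteq> Sat (lattice_span 1 (\<lambda>_. v))"
      unfolding Sat_def by (auto intro: exI[of _ 1])
  qed
  then show ?thesis using part1a by simp
qed



definition good :: "'n::finite mpoly set \<Rightarrow> ('n \<Rightarrow> int) \<Rightarrow> bool" where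
  "good J u \<longleftrightarrow> (\<forall>a b. expvec a b = u \<longrightarrow> monom a - monom b \<in> J)"

lemma good_canon: "canon_binomial w \<in> gen_ideal S \<Longrightarrow> good (gen_ideal S) w"
  unfolding good_def
proof (intro allI impI)
  fix a b assume c: "canon_binomial w \<in> gen_ideal S" and e: "expvec a b = w"
  then have "expvec a b = (\<lambda>j. int 1 * w j)" by simp
  then obtain r where "monom a - monom b = r * canon_binomial w" using pow_gen by blast
  then show "monom a - monom b \<in> gen_ideal S" using gen_ideal_mult[OF c] by metis
qed

lemma good_neg: "good (gen_ideal S) u \<Longrightarrow> good (gen_ideal S) (\<lambda>j. - u j)"
  unfolding good_def
proof (intro allI impI)
  fix a b assume g: "\<forall>a b. expvec a b = u \<longrightarrow> monom a - monom b \<in> gen_ideal S"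
    and e: "expvec a b = (\<lambda>j. - u j)"
  have "expvec b a = u"
  proof (rule ext)
    fix j have "int (a j) - int (b j) = - u j" using e by (metis expvec_def)
    then show "expvec b a j = u j" by (simp add: expvec_def)
  qed
  then have "monom b - monom a \<in> gen_ideal S" using g by blast
  from gen_ideal_uminus[OF this] show "monom a - monom b \<in> gen_ideal S" by simp
qed

lemma good_zero: "good (gen_ideal S) (\<lambda>_. 0)"
  unfolding good_def
proof (intro allI impI)
  fix a b :: "'a \<Rightarrow> nat" assume "expvec a b = (\<lambda>_. 0)"
  then have "a = b" by (auto simp: expvec_def fun_eq_iff)
  then show "monom a - monom b \<in> gen_ideal S" using gen_ideal_zero by simp
qed

lemma good_add:
  assumes P: "\<And>j. P j > 0" and PJ: "canon_binomial P \<in> gen_ideal S"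
    and g1: "good (gen_ideal S) u1" and g2: "good (gen_ideal S) u2"
  shows "good (gen_ideal S) (\<lambda>j. u1 j + u2 j)"
  unfolding good_def
proof (intro allI impI)
  fix a b :: "'a \<Rightarrow> nat" assume e: "expvec a b = (\<lambda>j. u1 j + u2 j)"
  define N where "N = (\<Sum>j\<in>UNIV. nat \<bar>u1 j\<bar>)"
  have Nge: "int N \<ge> \<bar>u1 j\<bar>" for j
  proof -
    have "nat \<bar>u1 j\<bar> \<le> N" unfolding N_def by (rule member_le_sum) auto
    then show ?thesis by linarith
  qed
  have NP: "int N * P j \<ge> int N" for j using P[of j] by (simp add: mult_le_cancel_left1)
  define a' where "a' j = a j + N * nat (P j)" for j
  define b' where "b' j = b j + N * nat (P j)" for j
  define m where "m j = nat (int (a' j) - u1 j)" for j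
  have pos: "int (a' j) - u1 j \<ge> 0" for j
  proof -
    have "int (a' j) = int (a j) + int N * P j" using P[of j] by (simp add: a'_def)
    then show ?thesis using Nge[of j] NP[of j] by linarith
  qed
  have ej: "int (a j) - int (b j) = u1 j + u2 j" for j using e by (metis expvec_def)
  have e1: "expvec a' m = u1" using pos by (auto simp: expvec_def m_def intro!: ext)
  have e2: "expvec m b' = u2"
  proof (rule ext)
    fix j show "expvec m b' j = u2 j"
      using pos[of j] ej[of j] by (simp add: expvec_def m_def a'_def b'_def)
  qed
  have e3: "expvec a' a = (\<lambda>j. int N * P j)"
    using P by (auto simp: expvec_def a'_def intro!: ext simp: less_imp_le)
  have e4: "expvec b' b = (\<lambda>j. int N * P j)"
    using P by (auto simp: expvec_def b'_def intro!: ext simp: less_imp_le)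
  have gP: "\<And>x y. expvec x y = (\<lambda>j. int N * P j) \<Longrightarrow> monom x - monom y \<in> gen_ideal S"
  proof -
    fix x y assume "expvec x y = (\<lambda>j. int N * P j)"
    then obtain r where "monom x - monom y = r * canon_binomial P" using pow_gen by blast
    then show "monom x - monom y \<in> gen_ideal S" using gen_ideal_mult[OF PJ] by metis
  qed
  have 1: "monom a' - monom a \<in> gen_ideal S" by (rule gP[OF e3])
  have 2: "monom b' - monom b \<in> gen_ideal S" by (rule gP[OF e4])
  have 3: "monom a' - monom m \<in> gen_ideal S" using g1 e1 unfolding good_def by blast
  have 4: "monom m - monom b' \<in> gen_ideal S" using g2 e2 unfolding good_def by blast
  have "monom a - monom b = (monom a' - monom m) + (monom m - monom b') + (monom b' - monom b) - (monom a' - monom a)"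
    by (simp add: algebra_simps)
  then show "monom a - monom b \<in> gen_ideal S"
    using 1 2 3 4 by (metis gen_ideal_add gen_ideal_diff)
qed

lemma good_smul_nat:
  assumes P: "\<And>j. P j > 0" and PJ: "canon_binomial P \<in> gen_ideal S"
    and g: "good (gen_ideal S) u"
  shows "good (gen_ideal S) (\<lambda>j. int n * u j)"
proof (induction n)
  case 0 then show ?case using good_zero by simp
next
  case (Suc n)
  have "good (gen_ideal S) (\<lambda>j. u j + int n * u j)" by (rule good_add[OF P PJ g Suc])
  then show ?case by (simp add: algebra_simps)
qed

lemma good_smul:
  assumes P: "\<And>j. P j > 0" and PJ: "canon_binomial P \<in> gen_ideal S"
    and g: "good (gen_ideal S) u"
  shows "good (gen_ideal S) (\<lambda>j. c * u j)"
proof (cases "c \<ge> 0")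
  case True
  then show ?thesis using good_smul_nat[OF P PJ g, of "nat c"] by simp
next
  case False
  then have "good (gen_ideal S) (\<lambda>j. - (int (nat (- c)) * u j))"
    using good_neg good_smul_nat[OF P PJ g, of "nat (-c)"] by blast
  then show ?thesis using False by simp
qed

lemma part2:
  fixes \<alpha> \<beta> :: "nat \<Rightarrow> ('n::finite \<Rightarrow> nat)"
  assumes i0: "i0 < k" and pos: "\<forall>j. expvec (\<alpha> i0) (\<beta> i0) j > 0"
  shows "gen_ideal ((\<lambda>i. canon_binomial (expvec (\<alpha> i) (\<beta> i))) ` {..<k})
         = lattice_ideal (lattice_span k (\<lambda>i. expvec (\<alpha> i) (\<beta> i)))"
proof -
  define vs where "vs i = expvec (\<alpha> i) (\<beta> i)" for i
  define G where "G = (\<lambda>i. canon_binomial (vs i)) ` {..<k}"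
  have inG: "i < k \<Longrightarrow> canon_binomial (vs i) \<in> gen_ideal G" for i
    by (rule gen_ideal_base) (simp add: G_def)
  have inL: "vs i \<in> lattice_span k vs" if "i < k" for i
  proof -
    have "(\<lambda>j. \<Sum>i'<k. (if i' = i then 1 else 0) * vs i' j) = vs i"
    proof (rule ext)
      fix j
      have "(\<Sum>i'<k. (if i' = i then 1 else 0) * vs i' j) = (\<Sum>i'<k. if i' = i then vs i' j else 0)"
        by (rule sum.cong) auto
      also have "\<dots> = vs i j" using that by (subst sum.delta) auto
      finally show "(\<Sum>i'<k. (if i' = i then 1 else 0) * vs i' j) = vs i j" .
    qed
    then show ?thesis unfolding lattice_span_def
      by (intro CollectI exI[of _ "\<lambda>i'. if i' = i then 1 else 0"]) simp
  qed
  have "gen_ideal G = lattice_ideal (lattice_span k vs)"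
  proof
    show "gen_ideal G \<subseteq> lattice_ideal (lattice_span k vs)"
      unfolding lattice_ideal_def
    proof (rule gen_ideal_subset, rule, rule gen_ideal_base)
      fix x assume "x \<in> G"
      then obtain i where i: "i < k" "x = canon_binomial (vs i)" unfolding G_def by blast
      show "x \<in> {monom \<alpha> - monom \<beta> |\<alpha> \<beta>. expvec \<alpha> \<beta> \<in> lattice_span k vs}"
        unfolding i canon_binomial_def using expvec_canon[of "vs i"] inL[OF i(1)]
        by (intro CollectI exI[of _ "pos_part (vs i)"] exI[of _ "neg_part (vs i)"]) simp
    qed
  next
    have P: "\<And>j. vs i0 j > 0" using pos by (simp add: vs_def)
    have PJ: "canon_binomial (vs i0) \<in> gen_ideal G" using inG[OF i0] .
    have gs: "m \<le> k \<Longrightarrow> good (gen_ideal G) (\<lambda>j. \<Sum>i<m. c i * vs i j)" for m c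
    proof (induction m)
      case 0 then show ?case using good_zero by simp
    next
      case (Suc m)
      have g1: "good (gen_ideal G) (\<lambda>j. \<Sum>i<m. c i * vs i j)" using Suc by simp
      have g2: "good (gen_ideal G) (\<lambda>j. c m * vs m j)"
        using good_smul[OF P PJ good_canon[OF inG]] Suc.prems by simp
      show ?case using good_add[OF P PJ g1 g2] by simp
    qed
    show "lattice_ideal (lattice_span k vs) \<subseteq> gen_ideal G"
      unfolding lattice_ideal_def
    proof (rule gen_ideal_subset, rule)
      fix x assume "x \<in> {monom \<alpha> - monom \<beta> |\<alpha> \<beta>. expvec \<alpha> \<beta> \<in> lattice_span k vs}"
      then obtain a b c where x: "x = monom a - monom b" and e: "expvec a b = (\<lambda>j. \<Sum>i<k. c i * vs i j)"
        unfolding lattice_span_def by blast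
      show "x \<in> gen_ideal G" using gs[of k c] e unfolding x good_def by blast
    qed
  qed
  then show ?thesis unfolding G_def vs_def .
qed

theorem proposition5p5:
  fixes v :: "'n::finite \<Rightarrow> int"
    and k :: nat and \<alpha> \<beta> :: "nat \<Rightarrow> ('n::finite \<Rightarrow> nat)"
  shows
   "(let p = canon_binomial v; L = lattice_span 1 (\<lambda>_. v) in
       gen_ideal {p} = lattice_ideal L \<and>
       (Factorial_Ring.irreducible p \<longrightarrow> gen_ideal {p} = lattice_ideal (Sat L)))
    \<and>
    ((\<exists>i<k. \<forall>j. expvec (\<alpha> i) (\<beta> i) j > 0) \<longrightarrow>
       gen_ideal ((\<lambda>i. canon_binomial (expvec (\<alpha> i) (\<beta> i))) ` {..<k})
         = lattice_ideal (lattice_span k (\<lambda>i. expvec (\<alpha> i) (\<beta> i))))"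
proof -
  have A: "gen_ideal {canon_binomial v} = lattice_ideal (lattice_span 1 (\<lambda>_. v))"
    by (rule part1a)
  have B: "Factorial_Ring.irreducible (canon_binomial v) \<longrightarrow>
      gen_ideal {canon_binomial v} = lattice_ideal (Sat (lattice_span 1 (\<lambda>_. v)))"
    using part1b by blast
  have C: "(\<exists>i<k. \<forall>j. expvec (\<alpha> i) (\<beta> i) j > 0) \<longrightarrow>
       gen_ideal ((\<lambda>i. canon_binomial (expvec (\<alpha> i) (\<beta> i))) ` {..<k})
         = lattice_ideal (lattice_span k (\<lambda>i. expvec (\<alpha> i) (\<beta> i)))"
  proof
    assume "\<exists>i<k. \<forall>j. expvec (\<alpha> i) (\<beta> i) j > 0"
    then obtain i0 where "i0 < k" "\<forall>j. expvec (\<alpha> i0) (\<beta> i0) j > 0" by blast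
    then show "gen_ideal ((\<lambda>i. canon_binomial (expvec (\<alpha> i) (\<beta> i))) ` {..<k})
         = lattice_ideal (lattice_span k (\<lambda>i. expvec (\<alpha> i) (\<beta> i)))"
      by (rule part2)
  qed
  show ?thesis unfolding Let_def using A B C by blast
qed

end
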